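(* Let $G\subseteq W(\mathsf D_n)$ be a finite group acting on $L=\mathbb Z^{n+2}=\bigoplus_{i=-1}^n\mathbb Z l_i$ via $\Phi$. For $i\in\{-1,0,1,\dots,n\}$ let $f_i:G\to L$ be the coboundary $f_i(g)=\Phi(g)l_i-l_i$. Suppose $I\subseteq\{-1,1,2,\dots,n\}$ is an index set such that $\xi=\frac12\sum_{i\in I}f_i$ is an $L$-valued $1$-cocycle whose class $[\xi]\in\mathrm H^1(G,L)$ is nonzero. Then $-1\notin I$.
   Context: $W(\mathsf B_n)$ is the group of signed permutations of the $2n$ symbols $j^\pm$ ($j=1,\dots,n$), generated by the symmetric group $\mathfrak S_n$ (permuting indices) and the involutions $c_j$ exchanging $j^+$ and $j^-$; every element can be written as $c_{j_1}\cdots c_{j_t}\tau$ with distinct $j_i$ and $\tau\in\mathfrak S_n$. The character $\sigma(c_{j_1}\cdots c_{j_t}\tau)=(-1)^t$ has kernel $W(\mathsf D_n)$. The lattice $L$ with basis $l_{-1},l_0,l_1,\dots,l_n$ models $\mathrm{Pic}(\bar X)$ of a standard conic bundle with $n$ degenerate fibers ($l_0$ the fiber class, $l_j$ a component of the $j$-th degenerate fiber). For $g=c_{j_1}\cdots c_{j_t}\tau\in W(\mathsf D_n)$ ($t$ even), set $s(i)=-1$ if $i\in\{j_1,\dots,j_t\}$ and $s(i)=1$ otherwise; then $\Phi(g)$ is the integral matrix with $\Phi(g)l_0=l_0$, $\Phi(g)l_{-1}=l_{-1}+\frac t2 l_0-\sum_{i:\,s(i)=-1}l_i$, and for $v\ge1$,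 with $u=\tau^{-1}(v)$: $\Phi(g)l_v=l_u$ if $s(u)=1$ and $\Phi(g)l_v=l_0-l_u$ if $s(u)=-1$. *)

theory Defs
  imports "HOL-Combinatorics.Permutations"
begin

text \<open>A signed permutation c_{j_1}...c_{j_t} tau is represented by the pair (S, tau)
  with S = {j_1,...,j_t} (the indices i with s(i) = -1) and tau a permutation of {1..n}.\<close>
type_synonym sperm = "nat set \<times> (nat \<Rightarrow> nat)"

definition WD :: "nat \<Rightarrow> sperm set" where
  "WD n = {(S, \<tau>). S \<subseteq> {1..n} \<and> even (card S) \<and> \<tau> permutes {1..n}}"

text \<open>Group law, chosen so that Phi is a homomorphism (the action of G on L).\<close>
definition sp_mult :: "nat \<Rightarrow> sperm \<Rightarrow> sperm \<Rightarrow> sperm" where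
  "sp_mult n g h = ({u \<in> {1..n}. (u \<in> fst g) \<noteq> (snd g u \<in> fst h)}, snd h \<circ> snd g)"

definition sp_one :: sperm where
  "sp_one = ({}, id)"

text \<open>The lattice L = Z^{n+2} with basis l_{-1}, l_0, ..., l_n, as functions int => int
  supported on {-1..n}.\<close>
definition latL :: "nat \<Rightarrow> (int \<Rightarrow> int) set" where
  "latL n = {x. \<forall>j. j \<notin> {-1..int n} \<longrightarrow> x j = 0}"

definition lb :: "int \<Rightarrow> int \<Rightarrow> int" where
  "lb i = (\<lambda>j. if j = i then 1 else 0)"

definition phi_basis :: "nat \<Rightarrow> sperm \<Rightarrow> int \<Rightarrow> (int \<Rightarrow> int)" where
  "phi_basis n g i =
     (let S = fst g; \<tau> = snd g in
      if i = 0 then lb 0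
      else if i = -1 then
        (\<lambda>j. lb (-1) j + int (card S div 2) * lb 0 j - (\<Sum>k\<in>S. lb (int k) j))
      else (let u = inv \<tau> (nat i) in
            if u \<in> S then (\<lambda>j. lb 0 j - lb (int u) j) else lb (int u)))"

definition phi :: "nat \<Rightarrow> sperm \<Rightarrow> (int \<Rightarrow> int) \<Rightarrow> (int \<Rightarrow> int)" where
  "phi n g x = (\<lambda>j. \<Sum>i\<in>{-1..int n}. x i * phi_basis n g i j)"

definition cob :: "nat \<Rightarrow> int \<Rightarrow> sperm \<Rightarrow> (int \<Rightarrow> int)" where
  "cob n i g = (\<lambda>j. phi n g (lb i) j - lb i j)"

text \<open>xi = 1/2 sum_{i in I} f_i (meaningful when all coordinates of the sum are even).\<close>
definition xi :: "nat \<Rightarrow> int set \<Rightarrow> sperm \<Rightarrow> (int \<Rightarrow> int)" where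
  "xi n I g = (\<lambda>j. (\<Sum>i\<in>I. cob n i g j) div 2)"

end

theory Submission
  imports Defs
begin


lemma phi_lb:
  assumes "i \<in> {-1..int n}"
  shows "phi n g (lb i) j = phi_basis n g i j"
proof -
  have "phi n g (lb i) j = (\<Sum>k\<in>{-1..int n}. (if i = k then phi_basis n g k j else 0))"
    unfolding phi_def lb_def by (intro sum.cong) auto
  also have "\<dots> = phi_basis n g i j" using assms by (simp add: sum.delta)
  finally show ?thesis .
qed

lemma cob_m1:
  assumes "finite S" "0 \<notin> S"
  shows "cob n (-1) (S,\<tau>) j = (if j = 0 then int (card S div 2) else 0)
          - (if j \<ge> 1 \<and> nat j \<in> S then 1 else 0)"
proof -
  have s: "(\<Sum>k\<in>S. lb (int k) j) = (if j \<ge> 1 \<and> nat j \<in> S then 1 else 0)"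
  proof -
    have "(\<Sum>k\<in>S. lb (int k) j) = (\<Sum>k\<in>S. if k = nat j \<and> j \<ge> 0 then 1 else 0)"
      unfolding lb_def by (intro sum.cong) auto
    also have "\<dots> = (if j \<ge> 0 \<and> nat j \<in> S then 1 else 0)"
      using assms by (cases "j \<ge> 0") (simp_all add: sum.delta')
    finally show ?thesis using assms(2) by (cases "j = 0") auto
  qed
  show ?thesis unfolding cob_def
    by (subst phi_lb) (simp_all add: phi_basis_def s, auto simp: lb_def)
qed

lemma cob_v:
  assumes "v \<in> {1..n}" "\<tau> permutes {1..n}"
  shows "cob n (int v) (S,\<tau>) j = (if j = 0 \<and> inv \<tau> v \<in> S then 1 else 0)
     + (if j = int (inv \<tau> v) then (if inv \<tau> v \<in> S then -1 else 1) else 0) - (if j = int v then 1 else 0)"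
proof -
  have "inv \<tau> v \<in> {1..n}" using assms permutes_inv permutes_in_image by metis
  then show ?thesis unfolding cob_def using assms(1)
    by (subst phi_lb) (auto simp: phi_basis_def lb_def Let_def)
qed

lemma sum_cob_v:
  assumes "P \<subseteq> {1..n}" "\<tau> permutes {1..n}"
  shows "(\<Sum>v\<in>P. cob n (int v) (S,\<tau>) j) = (if j = 0 then int (card {v\<in>P. inv \<tau> v \<in> S}) else 0)
     + (if j \<ge> 1 \<and> \<tau> (nat j) \<in> P then (if nat j \<in> S then -1 else 1) else 0)
     - (if j \<ge> 1 \<and> nat j \<in> P then 1 else 0)"
proof -
  have fin: "finite P" using assms(1) finite_subset by blast
  have bij: "bij \<tau>" using assms(2) permutes_bij by blast
  have "(\<Sum>v\<in>P. cob n (int v) (S,\<tau>) j) = (\<Sum>v\<in>P. (if j = 0 \<and> inv \<tau> v \<in> S then 1 else 0))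
     + (\<Sum>v\<in>P. (if j = int (inv \<tau> v) then (if inv \<tau> v \<in> S then -1 else 1) else 0))
     - (\<Sum>v\<in>P. (if j = int v then 1 else 0))"
    using assms by (simp add: cob_v subset_iff sum.distrib sum_subtractf)
  moreover have "(\<Sum>v\<in>P. (if j = 0 \<and> inv \<tau> v \<in> S then 1 else 0)) = (if j = 0 then int (card {v\<in>P. inv \<tau> v \<in> S}) else 0)"
    using fin by (simp add: sum.If_cases Int_def conj_commute)
  moreover have "(\<Sum>v\<in>P. (if j = int v then 1 else 0)) = (if j \<ge> 1 \<and> nat j \<in> P then (1::int) else 0)"
  proof -
    have "(\<Sum>v\<in>P. (if j = int v then 1 else 0)) = (\<Sum>v\<in>P. (if nat j = v \<and> j \<ge> 0 then (1::int) else 0))"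
      by (intro sum.cong) auto
    also have "\<dots> = (if j \<ge> 0 \<and> nat j \<in> P then (1::int) else 0)"
      using fin by (cases "j \<ge> 0") (simp_all add: sum.delta)
    finally show ?thesis using assms(1) by (cases "j = 0") auto
  qed
  moreover have "(\<Sum>v\<in>P. (if j = int (inv \<tau> v) then (if inv \<tau> v \<in> S then -1 else 1) else 0))
     = (if j \<ge> 1 \<and> \<tau> (nat j) \<in> P then (if nat j \<in> S then -1 else (1::int)) else 0)"
  proof -
    have e: "(j = int (inv \<tau> v)) = (j \<ge> 0 \<and> \<tau> (nat j) = v)" for v
      using bij by (auto simp: bij_inv_eq_iff bij_is_inj bij_is_surj surj_f_inv_f)
    have "(\<Sum>v\<in>P. (if j = int (inv \<tau> v) then (if inv \<tau> v \<in> S then -1 else 1) else 0))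
       = (\<Sum>v\<in>P. (if \<tau> (nat j) = v \<and> j \<ge> 0 then (if nat j \<in> S then -1 else (1::int)) else 0))"
      by (intro sum.cong) (auto simp: e bij_is_inj[OF bij])
    also have "\<dots> = (if j \<ge> 0 \<and> \<tau> (nat j) \<in> P then (if nat j \<in> S then -1 else (1::int)) else 0)"
      using fin by (cases "j \<ge> 0") (simp_all add: sum.delta)
    finally show ?thesis using assms permutes_def[of \<tau>] by (cases "j = 0") auto
  qed
  ultimately show ?thesis by simp
qed

lemma comb:
  fixes n :: nat and S P :: "nat set" and \<tau> :: "nat \<Rightarrow> nat"
  assumes S: "S \<subseteq> {1..n}" and tau: "\<tau> permutes {1..n}" and P: "P \<subseteq> {1..n}"
    and par: "\<forall>m\<in>{1..n}. (m \<in> S) = ((m \<in> P) \<noteq> (\<tau> m \<in> P))"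
  shows "card {v\<in>P. inv \<tau> v \<in> S} = card S div 2"
proof -
  define A where "A = {u\<in>{1..n}. \<tau> u \<in> P \<and> u \<notin> P}"
  define B where "B = {u\<in>{1..n}. u \<in> P \<and> \<tau> u \<notin> P}"
  define C where "C = {u\<in>{1..n}. u \<in> P \<and> \<tau> u \<in> P}"
  have bij: "bij \<tau>" using tau permutes_bij by blast
  have inj: "inj \<tau>" using bij bij_is_inj by blast
  have tin: "\<tau> u \<in> {1..n} \<longleftrightarrow> u \<in> {1..n}" for u
    by (rule permutes_in_image[OF tau])
  have fA: "finite A" "finite B" "finite C"
    unfolding A_def B_def C_def by (rule finite_subset[OF _ finite_atLeastAtMost[of "1::nat" n]], blast)+
  have SAB: "S = A \<union> B"
  proof (rule set_eqI)
    fix x show "x \<in> S \<longleftrightarrow> x \<in> A \<union> B"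
    proof (cases "x \<in> {1..n}")
      case True
      then have "(x \<in> S) = ((x \<in> P) \<noteq> (\<tau> x \<in> P))" using par by blast
      then show ?thesis using True unfolding A_def B_def by blast
    next
      case False
      then show ?thesis using S unfolding A_def B_def by blast
    qed
  qed
  have dAB: "A \<inter> B = {}" "A \<inter> C = {}" "B \<inter> C = {}" by (auto simp: A_def B_def C_def)
  have PBC: "P = B \<union> C" using P unfolding B_def C_def by auto
  have img: "\<tau> ` (A \<union> C) = P"
  proof
    show "\<tau> ` (A \<union> C) \<subseteq> P" unfolding A_def C_def by auto
    show "P \<subseteq> \<tau> ` (A \<union> C)"
    proof
      fix v assume v: "v \<in> P"
      obtain u where u: "v = \<tau> u" using bij by (metis bij_pointE)
      have "u \<in> {1..n}" by (metis P atLeastAtMost_iff subset_iff tin u v)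
      then show "v \<in> \<tau> ` (A \<union> C)" using u v unfolding A_def C_def by auto
    qed
  qed
  have "card (A \<union> C) = card P" unfolding img[symmetric] by (simp add: card_image inj_on_subset[OF inj])
  then have "card A + card C = card B + card C"
    using PBC dAB fA by (simp add: card_Un_disjoint)
  then have cAB: "card A = card B" by simp
  have cS: "card S = card A + card B" using SAB dAB fA by (simp add: card_Un_disjoint)
  have "{v\<in>P. inv \<tau> v \<in> S} = \<tau> ` A"
  proof
    show "\<tau> ` A \<subseteq> {v\<in>P. inv \<tau> v \<in> S}" using SAB inv_f_f[OF inj] unfolding A_def by auto
    show "{v\<in>P. inv \<tau> v \<in> S} \<subseteq> \<tau> ` A"
    proof
      fix v assume v: "v \<in> {v\<in>P. inv \<tau> v \<in> S}"
      obtain u where u: "v = \<tau> u" using bij by (metis bij_pointE)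
      have "u \<in> S" using v u inv_f_f[OF inj] by simp
      then have "u \<in> A" using SAB u v unfolding A_def B_def by auto
      then show "v \<in> \<tau> ` A" using u by auto
    qed
  qed
  then have "card {v\<in>P. inv \<tau> v \<in> S} = card A" by (simp add: card_image inj_on_subset[OF inj])
  then show ?thesis using cAB cS by simp
qed



theorem lemma3p2:
  fixes n :: nat and G :: "sperm set" and I :: "int set"
  assumes G_fin: "finite G"
    and G_sub: "G \<subseteq> WD n"
    and G_one: "sp_one \<in> G"
    and G_mult: "\<forall>g\<in>G. \<forall>h\<in>G. sp_mult n g h \<in> G"
    and I_sub: "I \<subseteq> {-1} \<union> {1..int n}"
    and integral: "\<forall>g\<in>G. \<forall>j. even (\<Sum>i\<in>I. cob n i g j)"
    and cocycle: "\<forall>g\<in>G. \<forall>h\<in>G. xi n I (sp_mult n g h) = (\<lambda>j. xi n I g j + phi n g (xi n I h) j)"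
    and nonzero: "\<not> (\<exists>y\<in>latL n. \<forall>g\<in>G. xi n I g = (\<lambda>j. phi n g y j - y j))"
  shows "-1 \<notin> I"
proof
  assume m1: "-1 \<in> I"
  define P where "P = {v\<in>{1..n}. int v \<in> I}"
  have Psub: "P \<subseteq> {1..n}" unfolding P_def by auto
  have finP: "finite P" using Psub finite_subset by blast
  have IP: "I = insert (-1) (int ` P)"
  proof
    show "I \<subseteq> insert (-1) (int ` P)"
    proof
      fix i assume i: "i \<in> I"
      show "i \<in> insert (-1) (int ` P)"
      proof (cases "i = -1")
        case False
        then have "i \<in> {1..int n}" using i I_sub by auto
        then have "nat i \<in> P" "i = int (nat i)" using i unfolding P_def by auto
        then show ?thesis by blast
      qed simp
    qed
    show "insert (-1) (int ` P) \<subseteq> I" using m1 unfolding P_def by auto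
  qed
  have nin: "-1 \<notin> int ` P" by auto
  have main: "xi n I g = cob n (-1) g" if g: "g \<in> G" for g
  proof -
    obtain S \<tau> where gS: "g = (S,\<tau>)" by (cases g)
    have S: "S \<subseteq> {1..n}" and tau: "\<tau> permutes {1..n}"
      using g G_sub gS unfolding WD_def by auto
    have finS: "finite S" using S finite_subset by blast
    have S0: "0 \<notin> S" using S by auto
    have sumI: "(\<Sum>i\<in>I. cob n i g j) = cob n (-1) g j + (\<Sum>v\<in>P. cob n (int v) g j)" for j
      unfolding IP using finP nin by (simp add: sum.reindex)
    have par: "\<forall>m\<in>{1..n}. (m \<in> S) = ((m \<in> P) \<noteq> (\<tau> m \<in> P))"
    proof
      fix m assume m: "m \<in> {1..n}"
      have "even (\<Sum>i\<in>I. cob n i g (int m))" using integral g by blast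
      then have "even (cob n (-1) g (int m) + (\<Sum>v\<in>P. cob n (int v) g (int m)))" by (simp add: sumI)
      then show "(m \<in> S) = ((m \<in> P) \<noteq> (\<tau> m \<in> P))"
        using m unfolding gS cob_m1[OF finS S0] sum_cob_v[OF Psub tau]
        by (auto split: if_splits)
    qed
    have key: "(\<Sum>v\<in>P. cob n (int v) g j) = cob n (-1) g j" for j
    proof -
      consider "j < 0" | "j = 0" | m where "j = int m" "m \<in> {1..n}" | m where "j = int m" "m > n"
      proof (cases "j \<ge> 1")
        case True
        have e: "j = int (nat j)" "nat j \<ge> 1" using True by auto
        show ?thesis
        proof (cases "nat j \<le> n")
          case True2: True
          then show ?thesis using that(3)[OF e(1)] e(2) by simp
        next
          case False
          then show ?thesis using that(4)[OF e(1)] by simp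
        qed
      next
        case False
        then show ?thesis using that(1,2) by linarith
      qed
      then show ?thesis
      proof cases
        case 1 then show ?thesis
          unfolding gS cob_m1[OF finS S0] sum_cob_v[OF Psub tau] by simp
      next
        case 2 then show ?thesis
          unfolding gS cob_m1[OF finS S0] sum_cob_v[OF Psub tau] using comb[OF S tau Psub par] by simp
      next
        case 3 then show ?thesis
          unfolding gS cob_m1[OF finS S0] sum_cob_v[OF Psub tau] using par by auto
      next
        case 4
        then have "\<tau> m = m" using tau unfolding permutes_def by auto
        then show ?thesis
          unfolding gS cob_m1[OF finS S0] sum_cob_v[OF Psub tau] using 4 Psub S by auto
      qed
    qed
    show ?thesis unfolding xi_def by (rule ext) (simp add: sumI key)
  qed
  have "lb (-1) \<in> latL n" unfolding latL_def lb_def by auto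
  moreover have "\<forall>g\<in>G. xi n I g = (\<lambda>j. phi n g (lb (-1)) j - lb (-1) j)"
    using main unfolding cob_def by auto
  ultimately show False using nonzero by blast
qed

end
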